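(* Let $a\in[0,\infty)$ and let $\theta:[0,1]\to[0,\infty]$ and $\vartheta:[0,\infty]\to[0,1]$ be continuous and decreasing functions such that $O_{\theta,\vartheta}(x,y)=\vartheta(\theta(x)+\theta(y))$ defines an overlap function $O_{\theta,\vartheta}:[0,1]^2\to[0,1]$. Suppose $\theta(x)=\frac{a}{2}$ if and only if $x=1$. Then the following are equivalent: (1) $O_{\theta,\vartheta}$ is a t-norm; (2) $1$ is a neutral element of $O_{\theta,\vartheta}$; (3) $\vartheta(\theta(x)+\frac{a}{2})=x$ for all $x\in[0,1]$.
   Context: "Decreasing" means non-increasing and "increasing" means non-decreasing. Arithmetic in $[0,\infty]$ uses $c+\infty=\infty$; continuity on $[0,\infty]$ refers to the usual topology of the extended half-line. An overlap function is a map $O:[0,1]^2\to[0,1]$ that is (O1) commutative, (O2) $O(x,y)=0$ iff $xy=0$, (O3) $O(x,y)=1$ iff $xy=1$, (O4) increasing in each variable, (O5) continuous. A t-norm is a commutative, associative map $T:[0,1]^2\to[0,1]$, increasing in each variable, with $T(x,1)=x$ for all $x$. *)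

theory Defs
  imports "HOL-Analysis.Analysis"
begin

text \<open>Binary operations on the unit interval are modelled as total functions
  real \<Rightarrow> real \<Rightarrow> real; all properties are relativised to [0,1].
  The extended half-line [0,\<infinity>] is the type ennreal.\<close>

definition overlap_function :: "(real \<Rightarrow> real \<Rightarrow> real) \<Rightarrow> bool" where
  "overlap_function Ov \<longleftrightarrow>
     (\<forall>x\<in>{0..1}. \<forall>y\<in>{0..1}. Ov x y \<in> {0..1}) \<and>
     (\<forall>x\<in>{0..1}. \<forall>y\<in>{0..1}. Ov x y = Ov y x) \<and>
     (\<forall>x\<in>{0..1}. \<forall>y\<in>{0..1}. Ov x y = 0 \<longleftrightarrow> x * y = 0) \<and>
     (\<forall>x\<in>{0..1}. \<forall>y\<in>{0..1}. Ov x y = 1 \<longleftrightarrow> x * y = 1) \<and>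
     (\<forall>x\<in>{0..1}. \<forall>y\<in>{0..1}. \<forall>z\<in>{0..1}. y \<le> z \<longrightarrow> Ov x y \<le> Ov x z \<and> Ov y x \<le> Ov z x) \<and>
     continuous_on ({0..1} \<times> {0..1}) (\<lambda>(x, y). Ov x y)"

definition t_norm :: "(real \<Rightarrow> real \<Rightarrow> real) \<Rightarrow> bool" where
  "t_norm T \<longleftrightarrow>
     (\<forall>x\<in>{0..1}. \<forall>y\<in>{0..1}. T x y \<in> {0..1}) \<and>
     (\<forall>x\<in>{0..1}. \<forall>y\<in>{0..1}. T x y = T y x) \<and>
     (\<forall>x\<in>{0..1}. \<forall>y\<in>{0..1}. \<forall>z\<in>{0..1}. T (T x y) z = T x (T y z)) \<and>
     (\<forall>x\<in>{0..1}. \<forall>y\<in>{0..1}. \<forall>z\<in>{0..1}. y \<le> z \<longrightarrow> T x y \<le> T x z \<and> T y x \<le> T z x) \<and>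
     (\<forall>x\<in>{0..1}. T x 1 = x)"

definition neutral_element :: "(real \<Rightarrow> real \<Rightarrow> real) \<Rightarrow> real \<Rightarrow> bool" where
  "neutral_element Ov e \<longleftrightarrow> (\<forall>x\<in>{0..1}. Ov e x = x \<and> Ov x e = x)"

end

theory Submission
  imports Defs
begin

theorem theorem4p1:
  fixes a :: real and \<theta> :: "real \<Rightarrow> ennreal" and \<phi> :: "ennreal \<Rightarrow> real"
  assumes a_nonneg: "a \<ge> 0"
    and \<theta>_cont: "continuous_on {0..1} \<theta>"
    and \<theta>_dec: "\<forall>x\<in>{0..1}. \<forall>y\<in>{0..1}. x \<le> y \<longrightarrow> \<theta> y \<le> \<theta> x"
    and \<phi>_range: "\<forall>t. \<phi> t \<in> {0..1}"
    and \<phi>_cont: "continuous_on UNIV \<phi>"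
    and \<phi>_dec: "\<forall>s t. s \<le> t \<longrightarrow> \<phi> t \<le> \<phi> s"
    and overlap: "overlap_function (\<lambda>x y. \<phi> (\<theta> x + \<theta> y))"
    and \<theta>_half: "\<forall>x\<in>{0..1}. \<theta> x = ennreal (a / 2) \<longleftrightarrow> x = 1"
  shows "(t_norm (\<lambda>x y. \<phi> (\<theta> x + \<theta> y)) \<longleftrightarrow> neutral_element (\<lambda>x y. \<phi> (\<theta> x + \<theta> y)) 1)
       \<and> (neutral_element (\<lambda>x y. \<phi> (\<theta> x + \<theta> y)) 1 \<longleftrightarrow>
            (\<forall>x\<in>{0..1}. \<phi> (\<theta> x + ennreal (a / 2)) = x))"
proof -
  define Ov where "Ov = (\<lambda>x y. \<phi> (\<theta> x + \<theta> y))"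
  have th1: "\<theta> 1 = ennreal (a/2)" using \<theta>_half by auto
  have ov: "\<forall>x\<in>{0..1}. \<forall>y\<in>{0..1}. Ov x y \<in> {0..1}"
     "\<forall>x\<in>{0..1}. \<forall>y\<in>{0..1}. Ov x y = Ov y x"
     "\<forall>x\<in>{0..1}. \<forall>y\<in>{0..1}. Ov x y = 0 \<longleftrightarrow> x * y = 0"
     "\<forall>x\<in>{0..1}. \<forall>y\<in>{0..1}. \<forall>z\<in>{0..1}. y \<le> z \<longrightarrow> Ov x y \<le> Ov x z \<and> Ov y x \<le> Ov z x"
    using overlap unfolding overlap_function_def Ov_def by auto
  have ne_iff: "neutral_element Ov 1 \<longleftrightarrow> (\<forall>x\<in>{0..1}. \<phi> (\<theta> x + ennreal (a / 2)) = x)"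
    unfolding neutral_element_def Ov_def th1 by (auto simp: add.commute)
  have tn_ne: "t_norm Ov \<Longrightarrow> neutral_element Ov 1"
    unfolding t_norm_def neutral_element_def by auto
  have ne_tn: "t_norm Ov" if H: "\<forall>x\<in>{0..1}. \<phi> (\<theta> x + ennreal (a / 2)) = x"
  proof -
    have ge: "ennreal (a/2) \<le> \<theta> x" if "x \<in> {0..1}" for x
      using \<theta>_dec that th1 by (metis atLeastAtMost_iff order_refl zero_le_one)
    have conn: "connected (\<theta> ` {0..1})"
      by (rule connected_continuous_image[OF \<theta>_cont]) simp
    have mem: "\<theta> 0 \<in> \<theta> ` {0..1}" "\<theta> 1 \<in> \<theta> ` {0..1}" by auto
    have th0: "\<theta> 0 = \<infinity>"
    proof (rule ccontr)
      assume "\<theta> 0 \<noteq> \<infinity>"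
      then obtain r where r: "\<theta> 0 = ennreal r" "r \<ge> 0"
        by (cases "\<theta> 0") auto
      have "r \<noteq> a/2" using \<theta>_half r by force
      moreover have "a/2 \<le> r" using ge[of 0] r a_nonneg by simp
      ultimately have lt: "a/2 < r" by simp
      define m where "m = (r + a/2)/2"
      have "ennreal m \<in> \<theta> ` {0..1}"
        apply (rule connectedD_interval[OF conn, of "\<theta> 1" "\<theta> 0"])
          apply (rule mem(2), rule mem(1))
        using lt a_nonneg by (auto simp: th1 r m_def)
      then obtain x where x: "x \<in> {0..1}" "\<theta> x = ennreal m" by auto
      have m0: "0 \<le> m" "m \<noteq> r" using lt a_nonneg unfolding m_def by auto
      have "x \<noteq> 0"
      proof
        assume "x = 0"
        hence "ennreal m = ennreal r" using x r by simp
        thus False using m0 r(2) by simp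
      qed
      have "\<theta> x + \<theta> x = \<theta> 0 + ennreal (a/2)"
        using x r lt a_nonneg by (simp add: m_def flip: ennreal_plus)
      hence "Ov x x = 0" using H unfolding Ov_def by auto
      hence "x * x = 0" using ov(3) x by auto
      thus False using \<open>x \<noteq> 0\<close> by simp
    qed
    have surj: "\<exists>v\<in>{0..1}. \<theta> v = t" if "ennreal (a/2) \<le> t" for t
    proof -
      have "t \<in> \<theta> ` {0..1}"
        apply (rule connectedD_interval[OF conn, of "\<theta> 1" "\<theta> 0"])
          apply (rule mem(2), rule mem(1))
        using that by (auto simp: th1 th0)
      thus ?thesis by auto
    qed
    have key: "\<theta> (Ov x y) + ennreal (a/2) = \<theta> x + \<theta> y" if xy: "x \<in> {0..1}" "y \<in> {0..1}" for x y
    proof -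
      obtain d where d: "\<theta> y = ennreal (a/2) + d" using ge[OF xy(2)] le_iff_add by blast
      have "ennreal (a/2) \<le> \<theta> x + d" using ge[OF xy(1)] by (metis add_increasing2 zero_le)
      then obtain v where v: "v \<in> {0..1}" "\<theta> v = \<theta> x + d" using surj by blast
      have s: "\<theta> x + \<theta> y = \<theta> v + ennreal (a/2)" using v d by (simp add: ac_simps)
      hence "Ov x y = v" unfolding Ov_def using H[rule_format, OF v(1)] by (simp only:)
      thus ?thesis using s by simp
    qed
    have assoc: "Ov (Ov x y) z = Ov x (Ov y z)" if xyz: "x \<in> {0..1}" "y \<in> {0..1}" "z \<in> {0..1}" for x y z
    proof -
      have u: "Ov x y \<in> {0..1}" "Ov y z \<in> {0..1}" using ov(1) xyz by auto
      have "(\<theta> (Ov x y) + \<theta> z) + ennreal (a/2) = \<theta> x + \<theta> y + \<theta> z"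
        using key[OF xyz(1,2)] by (simp add: ac_simps)
      also have "\<dots> = (\<theta> x + \<theta> (Ov y z)) + ennreal (a/2)"
        using key[OF xyz(2,3)] by (simp add: ac_simps)
      finally have "ennreal (a/2) + (\<theta> (Ov x y) + \<theta> z) = ennreal (a/2) + (\<theta> x + \<theta> (Ov y z))"
        by (simp only: add.commute)
      hence "\<theta> (Ov x y) + \<theta> z = \<theta> x + \<theta> (Ov y z)"
        unfolding ennreal_add_left_cancel by simp
      thus ?thesis unfolding Ov_def by simp
    qed
    have n: "\<forall>x\<in>{0..1}. Ov x 1 = x" using H unfolding Ov_def th1 by auto
    show ?thesis unfolding t_norm_def using ov(1,2,4) assoc n by blast
  qed
  show ?thesis using tn_ne ne_tn ne_iff unfolding Ov_def by blast
qed

end
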